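(* Under the standing assumptions, suppose in addition that $g$ is e-convex. Then the following are equivalent: (i) strong duality holds for $(P)-(D^F)$; (ii) strong duality holds for $(P)-(\bar D^F)$ and $\Omega\cap B=K\cap B$.
   Context: Let $X$ be a nontrivial separated locally convex space with topological dual $X^*$, endowed with the topology $\sigma(X,X^* )$; $\langle x,x^*\rangle$ is the value of $x^*\in X^*$ at $x\in X$. Put $W:=X^*\times X^*\times\mathbb{R}$, $\mathbb{R}_{++}:=]0,+\infty[$ and $Z:=X^*\times X^*\times\mathbb{R}_{++}$. For $y^*\in X^*$, $\alpha\in\mathbb{R}$, let $H^-_{y^*,\alpha}:=\{x\in X:\langle x,y^*\rangle<\alpha\}$. The coupling function $c:X\times W\to\overline{\mathbb{R}}$ is $c(x,(x^*,y^*,\alpha)):=\langle x,x^*\rangle$ if $\langle x,y^*\rangle<\alpha$ and $:=+\infty$ otherwise. For $h:X\to\overline{\mathbb{R}}$ its $c$-conjugate is $h^c:W\to\overline{\mathbb{R}}$, $h^c(w):=\sup_{x\in X}\{c(x,w)-h(x)\}$, with the convention $(+\infty)+(-\infty)=(-\infty)+(+\infty)=(+\infty)-(+\infty)=(-\infty)-(-\infty)=-\infty$ (so for proper $h$, $h^c(x^*,y^*,\alpha)=h^*(x^* )$ if $\operatorname{dom}h\subseteq H^-_{y^*,\alpha}$ and $+\infty$ otherwise). Epigraphs of functions on $W$ are subsets of $W\times\mathbb{R}$. $\delta_A$ is the indicator function of $A$. For $E\subseteq W\times\mathbb{R}$ and $e\in W\times\mathbb{R}$, $E-e:=\{z-e:z\in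 E\}$. A set $C\subseteq X\times\mathbb{R}$ is e-convex if for every point $p\notin C$ there is a continuous linear functional $\ell$ on $X\times\mathbb{R}$ with $\ell(q-p)<0$ for all $q\in C$; a function is e-convex if its epigraph is e-convex. Standing assumptions: $f,g:X\to\overline{\mathbb{R}}$ proper convex with $\operatorname{dom}f\subseteq\operatorname{dom}g$, $A\subseteq X$ nonempty, convention $(+\infty)-(+\infty)=+\infty$ in $f-g$; $v(P)=\inf_{x\in X}\{f(x)-g(x)+\delta_A(x)\}$. With $\varphi(u^*,v^*,\gamma;x^*,y^*,\alpha):=g^c(u^*,v^*,\gamma)-f^c(u^*-x^*,-y^*,\alpha)-\delta_A^c(x^*,y^*,\alpha)$: $v(D^F):=\sup_{(x^*,y^*,\alpha)\in Z}\inf_{(u^*,v^*,\gamma)\in\operatorname{dom}g^c}\varphi$ and $v(\bar D^F):=\inf_{(u^*,v^*,\gamma)\in\operatorname{dom}g^c}\sup_{(x^*,y^*,\alpha)\in Z}\varphi$. Strong duality for $(P)-(D^F)$ means $v(P)=v(D^F)$ and there is $(\bar x^*,\bar y^*,\bar\alpha)\in\operatorname{dom}\delta_A^c$ with $\varphi(u^*,v^*,\gamma;\bar x^*,\bar y^*,\bar\alpha)\ge v(D^F)$ for all $(u^*,v^*,\gamma)\in\operatorname{dom}g^c$. Strong duality for $(P)-(\bar D^F)$ means $v(P)=v(\bar D^F)$ and for every $(u^*,v^*,\gamma)\in\operatorname{dom}g^c$ there is $(x^*,y^*,\alpha)\in\operatorname{dom}\delta_A^c$ with $\varphi(u^*,v^*,\gamma;x^*,y^*,\alpha)\ge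 v(\bar D^F)$. Sets: $B:=\{0\}\times\{0\}\times\mathbb{R}_{++}\times\mathbb{R}\subseteq W\times\mathbb{R}$; $\Omega:=\bigcup_{(x^*,y^*,\alpha)\in\operatorname{dom}\delta_A^c}\ \bigcap_{(u^*,v^*,\gamma)\in\operatorname{dom}g^c}\Big[\operatorname{epi}\big(f-c(\cdot,(-x^*,-y^*,\alpha))\big)^c-\big(u^*,0,0,g^c(u^*,v^*,\gamma)-\delta_A^c(x^*,y^*,\alpha)\big)\Big]$, $K:=\bigcap_{(u^*,v^*,\gamma)\in\operatorname{dom}g^c}\ \bigcup_{(x^*,y^*,\alpha)\in\operatorname{dom}\delta_A^c}\Big[\operatorname{epi}\big(f-c(\cdot,(-x^*,-y^*,\alpha))\big)^c-\big(u^*,0,0,g^c(u^*,v^*,\gamma)-\delta_A^c(x^*,y^*,\alpha)\big)\Big]$. *)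

theory Defs
  imports "HOL-Analysis.Analysis"
begin

text \<open>The locally convex space X (with topology sigma(X,X*)) is modelled by a dual pair:
  a real vector space 'x, a real vector space 'y (the dual X*), and a bilinear pairing
  p x y = <x,y> separating points on both sides. W = 'y * 'y * real.\<close>

definition dual_pair :: "('x::real_vector \<Rightarrow> 'y::real_vector \<Rightarrow> real) \<Rightarrow> bool" where
  "dual_pair p \<longleftrightarrow> (\<forall>x. linear (\<lambda>y. p x y)) \<and> (\<forall>y. linear (\<lambda>x. p x y))
     \<and> (\<forall>x. x \<noteq> 0 \<longrightarrow> (\<exists>y. p x y \<noteq> 0)) \<and> (\<forall>y. y \<noteq> 0 \<longrightarrow> (\<exists>x. p x y \<noteq> 0))"

definition minus_lo :: "ereal \<Rightarrow> ereal \<Rightarrow> ereal" where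
  "minus_lo a b = (if (a = \<infinity> \<and> b = \<infinity>) \<or> (a = -\<infinity> \<and> b = -\<infinity>) then -\<infinity> else a - b)"

definition minus_up :: "ereal \<Rightarrow> ereal \<Rightarrow> ereal" where
  "minus_up a b = (if (a = \<infinity> \<and> b = \<infinity>) \<or> (a = -\<infinity> \<and> b = -\<infinity>) then \<infinity> else a - b)"

definition cpl :: "('x::real_vector \<Rightarrow> 'y::real_vector \<Rightarrow> real) \<Rightarrow> 'x \<Rightarrow> 'y \<times> 'y \<times> real \<Rightarrow> ereal" where
  "cpl p x w = (case w of (xs, ys, a) \<Rightarrow> if p x ys < a then ereal (p x xs) else \<infinity>)"

definition cconj :: "('x::real_vector \<Rightarrow> 'y::real_vector \<Rightarrow> real) \<Rightarrow> ('x \<Rightarrow> ereal) \<Rightarrow> 'y \<times> 'y \<times> real \<Rightarrow> ereal" where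
  "cconj p h w = (SUP x. minus_lo (cpl p x w) (h x))"

definition edom :: "('a \<Rightarrow> ereal) \<Rightarrow> 'a set" where
  "edom h = {w. h w < \<infinity>}"

definition epi :: "('a \<Rightarrow> ereal) \<Rightarrow> ('a \<times> real) set" where
  "epi h = {(w, r). h w \<le> ereal r}"

definition ind :: "'a set \<Rightarrow> 'a \<Rightarrow> ereal" where
  "ind A x = (if x \<in> A then 0 else \<infinity>)"

definition proper_convex :: "('x::real_vector \<Rightarrow> ereal) \<Rightarrow> bool" where
  "proper_convex h \<longleftrightarrow> (\<exists>x. h x < \<infinity>) \<and> (\<forall>x. h x > -\<infinity>) \<and> convex (epi h)"

text \<open>e-convexity: continuous linear functionals on X x R (sigma(X,X*) x usual) are
  exactly (x,t) |-> <x,y> + s t with y in X*, s real.\<close>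
definition econvex_set :: "('x::real_vector \<Rightarrow> 'y::real_vector \<Rightarrow> real) \<Rightarrow> ('x \<times> real) set \<Rightarrow> bool" where
  "econvex_set p C \<longleftrightarrow> (\<forall>pt. pt \<notin> C \<longrightarrow>
      (\<exists>y s. \<forall>q\<in>C. p (fst q - fst pt) y + s * (snd q - snd pt) < 0))"

definition econvex_fun :: "('x::real_vector \<Rightarrow> 'y::real_vector \<Rightarrow> real) \<Rightarrow> ('x \<Rightarrow> ereal) \<Rightarrow> bool" where
  "econvex_fun p h \<longleftrightarrow> econvex_set p (epi h)"

definition Zset :: "('y \<times> 'y \<times> real) set" where
  "Zset = {(x, y, a). a > 0}"

definition vP :: "('x \<Rightarrow> ereal) \<Rightarrow> ('x \<Rightarrow> ereal) \<Rightarrow> 'x set \<Rightarrow> ereal" where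
  "vP f g A = (INF x. minus_up (f x) (g x) + ind A x)"

definition phi :: "('x::real_vector \<Rightarrow> 'y::real_vector \<Rightarrow> real) \<Rightarrow> ('x \<Rightarrow> ereal) \<Rightarrow> ('x \<Rightarrow> ereal) \<Rightarrow> 'x set
    \<Rightarrow> 'y \<times> 'y \<times> real \<Rightarrow> 'y \<times> 'y \<times> real \<Rightarrow> ereal" where
  "phi p f g A w z = (case w of (u, v, c) \<Rightarrow> case z of (x, y, a) \<Rightarrow>
     minus_lo (minus_lo (cconj p g (u, v, c)) (cconj p f (u - x, - y, a))) (cconj p (ind A) (x, y, a)))"

definition vDF :: "('x::real_vector \<Rightarrow> 'y::real_vector \<Rightarrow> real) \<Rightarrow> ('x \<Rightarrow> ereal) \<Rightarrow> ('x \<Rightarrow> ereal) \<Rightarrow> 'x set \<Rightarrow> ereal" where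
  "vDF p f g A = (SUP z\<in>Zset. INF w\<in>edom (cconj p g). phi p f g A w z)"

definition vDbarF :: "('x::real_vector \<Rightarrow> 'y::real_vector \<Rightarrow> real) \<Rightarrow> ('x \<Rightarrow> ereal) \<Rightarrow> ('x \<Rightarrow> ereal) \<Rightarrow> 'x set \<Rightarrow> ereal" where
  "vDbarF p f g A = (INF w\<in>edom (cconj p g). SUP z\<in>Zset. phi p f g A w z)"

definition strong_DF :: "('x::real_vector \<Rightarrow> 'y::real_vector \<Rightarrow> real) \<Rightarrow> ('x \<Rightarrow> ereal) \<Rightarrow> ('x \<Rightarrow> ereal) \<Rightarrow> 'x set \<Rightarrow> bool" where
  "strong_DF p f g A \<longleftrightarrow> vP f g A = vDF p f g A \<and>
     (\<exists>z\<in>edom (cconj p (ind A)). \<forall>w\<in>edom (cconj p g). phi p f g A w z \<ge> vDF p f g A)"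

definition strong_DbarF :: "('x::real_vector \<Rightarrow> 'y::real_vector \<Rightarrow> real) \<Rightarrow> ('x \<Rightarrow> ereal) \<Rightarrow> ('x \<Rightarrow> ereal) \<Rightarrow> 'x set \<Rightarrow> bool" where
  "strong_DbarF p f g A \<longleftrightarrow> vP f g A = vDbarF p f g A \<and>
     (\<forall>w\<in>edom (cconj p g). \<exists>z\<in>edom (cconj p (ind A)). phi p f g A w z \<ge> vDbarF p f g A)"

definition Bset :: "(('y::real_vector \<times> 'y \<times> real) \<times> real) set" where
  "Bset = {((x, y, a), r). x = 0 \<and> y = 0 \<and> a > 0}"

text \<open>The translated set
  epi (f - c(., (-x*,-y*,alpha)))^c - (u*, 0, 0, g^c(u*,v*,gamma) - delta_A^c(x*,y*,alpha)).\<close>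
definition Eset :: "('x::real_vector \<Rightarrow> 'y::real_vector \<Rightarrow> real) \<Rightarrow> ('x \<Rightarrow> ereal) \<Rightarrow> ('x \<Rightarrow> ereal) \<Rightarrow> 'x set
    \<Rightarrow> 'y \<times> 'y \<times> real \<Rightarrow> 'y \<times> 'y \<times> real \<Rightarrow> (('y \<times> 'y \<times> real) \<times> real) set" where
  "Eset p f g A w z = (case w of (u, v, c) \<Rightarrow> case z of (x, y, a) \<Rightarrow>
     (\<lambda>q. q - ((u, 0, 0), real_of_ereal (cconj p g (u, v, c) - cconj p (ind A) (x, y, a))))
       ` epi (cconj p (\<lambda>t. minus_up (f t) (cpl p t (- x, - y, a)))))"

definition Omega :: "('x::real_vector \<Rightarrow> 'y::real_vector \<Rightarrow> real) \<Rightarrow> ('x \<Rightarrow> ereal) \<Rightarrow> ('x \<Rightarrow> ereal) \<Rightarrow> 'x set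
    \<Rightarrow> (('y \<times> 'y \<times> real) \<times> real) set" where
  "Omega p f g A = (\<Union>z\<in>edom (cconj p (ind A)). \<Inter>w\<in>edom (cconj p g). Eset p f g A w z)"

definition Kset :: "('x::real_vector \<Rightarrow> 'y::real_vector \<Rightarrow> real) \<Rightarrow> ('x \<Rightarrow> ereal) \<Rightarrow> ('x \<Rightarrow> ereal) \<Rightarrow> 'x set
    \<Rightarrow> (('y \<times> 'y \<times> real) \<times> real) set" where
  "Kset p f g A = (\<Inter>w\<in>edom (cconj p g). \<Union>z\<in>edom (cconj p (ind A)). Eset p f g A w z)"

end

theory Submission imports Defs begin

lemma dp_lin:
  assumes "dual_pair p"
  shows "p t 0 = 0" "p t (u - x) = p t u - p t x" "p t (- y) = - p t y"
    "p (t - s) y = p t y - p s y" "p t (c *\<^sub>R y) = c * p t y"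
proof -
  have l1: "linear (\<lambda>y. p t y)" and l2: "linear (\<lambda>x. p x y)"
    using assms unfolding dual_pair_def by auto
  show "p t 0 = 0" using linear_0[OF l1] by simp
  show "p t (u - x) = p t u - p t x" using real_vector.linear_diff[OF l1] by simp
  show "p t (- y) = - p t y" using real_vector.linear_neg[OF l1] by simp
  show "p (t - s) y = p t y - p s y" using real_vector.linear_diff[OF l2] by simp
  show "p t (c *\<^sub>R y) = c * p t y" using linear_cmul[OF l1] by simp
qed

lemma cpl_simp: "cpl p t (u, v, c) = (if p t v < c then ereal (p t u) else \<infinity>)"
  by (simp add: cpl_def)

lemma cpl_not_minf: "cpl p t w \<noteq> -\<infinity>"
  by (cases w) (auto simp: cpl_def)

lemma minus_lo_fin: "minus_lo (ereal a) h = ereal a - h"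
  by (simp add: minus_lo_def)

lemma minus_lo_fin2: "minus_lo h (ereal a) = h - ereal a"
  by (simp add: minus_lo_def)

lemma minus_lo_top2: "minus_lo h \<infinity> = -\<infinity>"
  by (cases h) (auto simp: minus_lo_def)

lemma phi_eq_aux: "minus_lo (minus_lo (ereal g) F) (ereal d) = ereal g - F - ereal d"
  by (simp add: minus_lo_def)

lemma pointwise:
  assumes "dual_pair p" "b > 0"
  shows "minus_lo (cpl p t (u, 0, b)) (minus_up (f t) (cpl p t (- x, - y, a)))
       = minus_lo (cpl p t (u - x, - y, a)) (f t)"
proof -
  note L = dp_lin[OF assms(1)]
  show ?thesis
  proof (cases "p t (- y) < a")
    case True
    then show ?thesis using assms
      by (cases "f t") (auto simp: cpl_simp L minus_lo_def minus_up_def)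
  next
    case False
    then show ?thesis using assms
      by (cases "f t") (auto simp: cpl_simp L minus_lo_def minus_up_def)
  qed
qed

lemma img_transl: "(\<lambda>q. q - (d::'a::ab_group_add)) ` S = {q. q + d \<in> S}"
  apply (auto simp: image_iff)
  by (metis add_diff_cancel)

lemma Eset_B:
  assumes "dual_pair p" "b > 0"
  shows "(((0,0,b),r) \<in> Eset p f g A (u,v,c) (x,y,a)) \<longleftrightarrow>
     cconj p f (u - x, -y, a) \<le> ereal (r + real_of_ereal (cconj p g (u,v,c) - cconj p (ind A) (x,y,a)))"
proof -
  define R where "R = real_of_ereal (cconj p g (u,v,c) - cconj p (ind A) (x,y,a))"
  define H where "H = cconj p (\<lambda>t. minus_up (f t) (cpl p t (- x, - y, a)))"
  note img = img_transl
  have "(((0,0,b),r) \<in> Eset p f g A (u,v,c) (x,y,a)) \<longleftrightarrow> ((u,0,b), r + R) \<in> epi H"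
    unfolding Eset_def R_def H_def img by simp
  also have "\<dots> \<longleftrightarrow> H (u,0,b) \<le> ereal (r + R)" by (simp add: epi_def)
  also have "H (u,0,b) = cconj p f (u - x, -y, a)"
    unfolding H_def cconj_def using pointwise[OF assms] by simp
  finally show ?thesis by (simp add: R_def)
qed

lemma B_equiv:
  "(F \<le> ereal (r + real_of_ereal (ereal g - ereal d))) \<longleftrightarrow> ereal g - F - ereal d \<ge> ereal (- r)"
  by (cases F) auto


lemma cconj_lb: "h t0 = ereal r \<Longrightarrow> cpl p t0 w - ereal r \<le> cconj p h w"
  unfolding cconj_def by (rule SUP_upper2[of t0]) (auto simp: minus_lo_fin2)

lemma cconj_notminf:
  assumes "h t0 = ereal r" shows "cconj p h w \<noteq> -\<infinity>"
proof
  assume "cconj p h w = -\<infinity>"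
  with cconj_lb[of h t0 r p w, OF assms] have "cpl p t0 w - ereal r = -\<infinity>" by simp
  then show False using cpl_not_minf[of p t0 w] by (cases "cpl p t0 w") auto
qed

lemma proper_fin:
  assumes "proper_convex h" obtains t0 r where "h t0 = ereal r"
proof -
  from assms obtain t0 where "h t0 < \<infinity>" "h t0 > -\<infinity>" unfolding proper_convex_def by blast
  then show ?thesis using that by (cases "h t0") auto
qed

lemma G_fin:
  assumes "proper_convex h" "cconj p h w < \<infinity>" shows "\<exists>gv. cconj p h w = ereal gv"
proof -
  obtain t0 r where "h t0 = ereal r" using proper_fin[OF assms(1)] by blast
  from cconj_notminf[of h t0 r p w, OF this] assms(2) show ?thesis by (cases "cconj p h w") auto
qed

lemma D_fin:
  assumes "A \<noteq> {}" "cconj p (ind A) z < \<infinity>" shows "\<exists>dv. cconj p (ind A) z = ereal dv"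
proof -
  obtain t0 where "t0 \<in> A" using assms by blast
  then have "ind A t0 = ereal 0" by (simp add: ind_def)
  from cconj_notminf[of "ind A" t0 0 p z, OF this] assms(2) show ?thesis by (cases "cconj p (ind A) z") auto
qed

lemma shift_D:
  assumes "cconj p (ind A) (x,y,a) < \<infinity>" "a \<le> a'"
  shows "cconj p (ind A) (x,y,a') = cconj p (ind A) (x,y,a)"
proof -
  have inA: "p t y < a" if "t \<in> A" for t
  proof (rule ccontr)
    assume "\<not> p t y < a"
    then have "cpl p t (x,y,a) = \<infinity>" by (simp add: cpl_simp)
    with cconj_lb[of "ind A" t 0 p "(x,y,a)"] that assms(1) show False by (simp add: ind_def)
  qed
  have "minus_lo (cpl p t (x,y,a')) (ind A t) = minus_lo (cpl p t (x,y,a)) (ind A t)" for t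
  proof (cases "t \<in> A")
    case True then show ?thesis using inA[OF True] assms(2) by (simp add: cpl_simp ind_def)
  next
    case False then show ?thesis by (simp add: ind_def minus_lo_top2)
  qed
  then show ?thesis unfolding cconj_def by simp
qed

lemma shift_F_pt:
  assumes "a \<le> a'"
  shows "minus_lo (cpl p t (u,y,a')) (f t) \<le> minus_lo (cpl p t (u,y,a)) (f t)"
proof (cases "p t y < a")
  case True then show ?thesis using assms by (simp add: cpl_simp)
next
  case False then show ?thesis
    by (cases "f t"; cases "p t y < a'") (auto simp: cpl_simp minus_lo_def)
qed

lemma shift_F:
  assumes "a \<le> a'"
  shows "cconj p f (u,y,a') \<le> cconj p f (u,y,a)"
  unfolding cconj_def by (rule SUP_mono) (use shift_F_pt[OF assms] in blast)

lemma aux_mono: "F' \<le> F \<Longrightarrow> ereal gv - F - ereal dv \<le> ereal gv - F' - ereal dv"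
  by (cases F; cases F') auto

lemma aux_bound: "ereal k \<le> F \<Longrightarrow> ereal gv - F - ereal dv \<le> ereal (gv - k - dv)"
  by (cases F) auto

lemma phi_simp: "phi p f g A (u,v,c) (x,y,a) =
   minus_lo (minus_lo (cconj p g (u,v,c)) (cconj p f (u - x, - y, a))) (cconj p (ind A) (x,y,a))"
  by (simp add: phi_def)

lemma minorant:
  assumes dp: "dual_pair p" and ec: "econvex_fun p g" and nm: "\<forall>t. g t > -\<infinity>"
    and gx: "g x0 = ereal g0" and b: "\<beta> < g0"
  shows "\<exists>u. cconj p g (u,0,1) \<le> ereal (p x0 u - \<beta>)"
proof -
  note L = dp_lin[OF dp]
  have "(x0, \<beta>) \<notin> epi g" using gx b by (simp add: epi_def)
  then obtain y s where H: "\<forall>q\<in>epi g. p (fst q - x0) y + s * (snd q - \<beta>) < 0"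
    using ec unfolding econvex_fun_def econvex_set_def by fastforce
  have "(x0, g0) \<in> epi g" using gx by (simp add: epi_def)
  with H have "p (x0 - x0) y + s * (g0 - \<beta>) < 0" by fastforce
  then have "s * (g0 - \<beta>) < 0" using L(4)[of x0 x0 y] by simp
  then have s: "s < 0" using b by (simp add: mult_less_0_iff)
  define u where "u = (- 1 / s) *\<^sub>R y"
  have pu0: "p t u = (- 1 / s) * p t y" for t unfolding u_def by (rule L(5))
  have pu: "p t u = - p t y / s" for t using pu0[of t] by simp
  have "minus_lo (cpl p t (u,0,1)) (g t) \<le> ereal (p x0 u - \<beta>)" for t
  proof -
    have c: "cpl p t (u,0,1) = ereal (p t u)" by (simp add: cpl_simp L(1))
    show ?thesis
    proof (cases "g t")
      case (real gt)
      then have "(t, gt) \<in> epi g" by (simp add: epi_def)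
      with H have "p (t - x0) y + s * (gt - \<beta>) < 0" by fastforce
      then have "p t y - p x0 y < (-s) * (gt - \<beta>)" using L(4)[of t x0 y] by (simp add: algebra_simps)
      then have "(p t y - p x0 y) / (-s) < gt - \<beta>" using s by (subst pos_divide_less_eq) (auto simp: algebra_simps)
      moreover have "p t u - p x0 u = (p t y - p x0 y) / (-s)" using s by (simp add: pu field_simps)
      ultimately have "p t u - gt \<le> p x0 u - \<beta>" by linarith
      then show ?thesis using real c by (simp add: minus_lo_fin)
    next
      case PInf then show ?thesis using c by (simp add: minus_lo_fin)
    next
      case MInf then show ?thesis using nm by (metis less_irrefl)
    qed
  qed
  then show ?thesis unfolding cconj_def by (intro exI[of _ u] SUP_least) auto
qed

lemma phi_bound:
  assumes dp: "dual_pair p" and G: "cconj p g (u,v,c) = ereal gv" and x0: "x0 \<in> A"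
    and fx: "f x0 = ereal f0"
  shows "phi p f g A (u,v,c) (x,y,a) \<le> ereal (gv - p x0 u + f0)"
proof (cases "cconj p (ind A) (x,y,a) = \<infinity>")
  case True then show ?thesis by (simp add: phi_simp minus_lo_top2)
next
  case False
  note L = dp_lin[OF dp]
  have i0: "ind A x0 = ereal 0" using x0 by (simp add: ind_def)
  have Dlb: "cpl p x0 (x,y,a) \<le> cconj p (ind A) (x,y,a)"
    using cconj_lb[of "ind A" x0 0 p "(x,y,a)", OF i0] by simp
  then have ya: "p x0 y < a" using False by (auto simp: cpl_simp split: if_splits)
  then have Dlb2: "ereal (p x0 x) \<le> cconj p (ind A) (x,y,a)" using Dlb by (simp add: cpl_simp)
  then obtain dv where D: "cconj p (ind A) (x,y,a) = ereal dv" and dv: "p x0 x \<le> dv"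
    using False by (cases "cconj p (ind A) (x,y,a)") auto
  have Flb: "cpl p x0 (u - x, - y, a) - ereal f0 \<le> cconj p f (u - x, - y, a)"
    using cconj_lb[of f x0 f0 p, OF fx] by simp
  show ?thesis
  proof (cases "p x0 (- y) < a")
    case True
    then have "ereal (p x0 u - p x0 x - f0) \<le> cconj p f (u - x, - y, a)"
      using Flb by (simp add: cpl_simp L)
    then have "ereal gv - cconj p f (u - x, - y, a) - ereal dv \<le> ereal (gv - (p x0 u - p x0 x - f0) - dv)"
      by (rule aux_bound)
    also have "\<dots> \<le> ereal (gv - p x0 u + f0)" using dv by simp
    finally show ?thesis by (simp add: phi_simp G D phi_eq_aux)
  next
    case False
    then have "cconj p f (u - x, - y, a) = \<infinity>" using Flb by (simp add: cpl_simp)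
    then show ?thesis by (simp add: phi_simp G D minus_lo_def)
  qed
qed

lemma minimax:
  fixes p :: "'x::real_vector \<Rightarrow> 'y::real_vector \<Rightarrow> real"
  shows "vDF p f g A \<le> vDbarF p f g A"
  unfolding vDF_def vDbarF_def
proof (rule SUP_least, rule INF_greatest)
  fix z :: "'y \<times> 'y \<times> real" and w assume "z \<in> Zset" "w \<in> edom (cconj p g)"
  then show "(INF w\<in>edom (cconj p g). phi p f g A w z) \<le> (SUP z\<in>Zset. phi p f g A w z)"
    by (meson INF_lower2 SUP_upper order_refl)
qed

lemma weak:
  fixes p :: "'x::real_vector \<Rightarrow> 'y::real_vector \<Rightarrow> real"
  assumes dp: "dual_pair p" and pf: "proper_convex f" and pg: "proper_convex g"
    and dom: "edom f \<subseteq> edom g" and ec: "econvex_fun p g"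
  shows "vDbarF p f g A \<le> vP f g A"
  unfolding vP_def
proof (rule INF_greatest)
  fix x0 :: 'x
  have nmg: "\<forall>t. g t > -\<infinity>" and nmf: "\<forall>t. f t > -\<infinity>"
    using pg pf by (auto simp: proper_convex_def)
  show "vDbarF p f g A \<le> minus_up (f x0) (g x0) + ind A x0"
  proof (cases "x0 \<in> A \<and> f x0 \<noteq> \<infinity>")
    case False
    then have "x0 \<notin> A \<or> f x0 = \<infinity>" by blast
    then show ?thesis
    proof
      assume "x0 \<notin> A" then show ?thesis by (simp add: ind_def)
    qed (cases "g x0"; simp add: minus_up_def)
  next
    case True
    then obtain f0 where fx: "f x0 = ereal f0" using nmf by (cases "f x0") auto
    then have "x0 \<in> edom f" by (simp add: edom_def)
    with dom have "x0 \<in> edom g" by blast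
    then obtain g0 where gx: "g x0 = ereal g0" using nmg by (cases "g x0") (auto simp: edom_def fx)
    have val: "minus_up (f x0) (g x0) + ind A x0 = ereal (f0 - g0)"
      using True fx gx by (simp add: minus_up_def ind_def)
    have "vDbarF p f g A \<le> ereal (f0 - g0) + ereal e" if e: "e > 0" for e
    proof -
      obtain u where u: "cconj p g (u,0,1) \<le> ereal (p x0 u - (g0 - e))"
        using minorant[OF dp ec nmg gx, of "g0 - e"] e by auto
      then have wD: "(u,0,1) \<in> edom (cconj p g)" by (auto simp: edom_def)
      then obtain gv where G: "cconj p g (u,0,1) = ereal gv"
        using G_fin[OF pg, of p "(u,0,1)"] by (auto simp: edom_def)
      have "vDbarF p f g A \<le> (SUP z\<in>Zset. phi p f g A (u,0,1) z)"
        unfolding vDbarF_def using wD by (rule INF_lower)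
      also have "\<dots> \<le> ereal (gv - p x0 u + f0)"
      proof (rule SUP_least)
        fix z :: "'y \<times> 'y \<times> real" assume "z \<in> Zset"
        obtain x y a where "z = (x,y,a)" by (cases z)
        then show "phi p f g A (u,0,1) z \<le> ereal (gv - p x0 u + f0)"
          using phi_bound[of p g u 0 1 gv x0 A f f0 x y a, OF dp G _ fx] True by simp
      qed
      also have "\<dots> \<le> ereal (f0 - g0) + ereal e" using u G by simp
      finally show ?thesis .
    qed
    then show ?thesis unfolding val by (rule ereal_le_epsilon2)
  qed
qed

theorem corollary5p6:
  fixes p :: "'x::real_vector \<Rightarrow> 'y::real_vector \<Rightarrow> real"
    and f g :: "'x \<Rightarrow> ereal" and A :: "'x set"
  assumes "dual_pair p"
    and "\<exists>x::'x. x \<noteq> 0"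
    and "proper_convex f" and "proper_convex g"
    and "edom f \<subseteq> edom g"
    and "A \<noteq> {}"
    and "econvex_fun p g"
  shows "strong_DF p f g A \<longleftrightarrow>
           (strong_DbarF p f g A \<and> Omega p f g A \<inter> Bset = Kset p f g A \<inter> Bset)"
proof -
  note dp = assms(1) and pf = assms(3) and pg = assms(4) and Ane = assms(6)
  define Dg where "Dg = edom (cconj p g)"
  define DA where "DA = edom (cconj p (ind A))"
  have Gfin: "\<exists>gv. cconj p g w = ereal gv" if "w \<in> Dg" for w
    using G_fin[OF pg, of p w] that by (simp add: Dg_def edom_def)
  have Dfin: "\<exists>dv. cconj p (ind A) z = ereal dv" if "z \<in> DA" for z
    using D_fin[OF Ane, of p z] that by (simp add: DA_def edom_def)
  have phiE: "\<exists>gv dv. phi p f g A (u,v,c) (x,y,a) = ereal gv - cconj p f (u - x, - y, a) - ereal dv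
      \<and> cconj p g (u,v,c) = ereal gv \<and> cconj p (ind A) (x,y,a) = ereal dv"
    if hw: "(u,v,c) \<in> Dg" and hz: "(x,y,a) \<in> DA" for u v c x y a
  proof -
    obtain gv where G: "cconj p g (u,v,c) = ereal gv" using Gfin[OF hw] by blast
    obtain dv where D: "cconj p (ind A) (x,y,a) = ereal dv" using Dfin[OF hz] by blast
    show ?thesis using G D by (simp add: phi_simp phi_eq_aux)
  qed
  have memB: "(((0,0,b),r) \<in> Eset p f g A w z) \<longleftrightarrow> ereal (- r) \<le> phi p f g A w z"
    if hw: "w \<in> Dg" and hz: "z \<in> DA" and hb: "b > 0" for w z b r
  proof -
    obtain u v c where w: "w = (u,v,c)" by (cases w)
    obtain x y a where z: "z = (x,y,a)" by (cases z)
    obtain gv dv where E: "phi p f g A (u,v,c) (x,y,a) = ereal gv - cconj p f (u - x, - y, a) - ereal dv"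
      "cconj p g (u,v,c) = ereal gv" "cconj p (ind A) (x,y,a) = ereal dv"
      using phiE[of u v c x y a] hw hz w z by blast
    show ?thesis unfolding w z Eset_B[OF dp hb] E B_equiv ..
  qed
  have toZ: "\<exists>z'\<in>Zset \<inter> DA. \<forall>w\<in>Dg. phi p f g A w z \<le> phi p f g A w z'" if "z \<in> DA" for z
  proof -
    obtain x y a where z: "z = (x,y,a)" by (cases z)
    have le: "a \<le> max a 1" by simp
    have Deq: "cconj p (ind A) (x,y,max a 1) = cconj p (ind A) (x,y,a)"
      using shift_D[OF _ le] that z by (simp add: DA_def edom_def)
    then have inDA: "(x,y,max a 1) \<in> DA" using that z by (simp add: DA_def edom_def)
    have "phi p f g A w z \<le> phi p f g A w (x,y,max a 1)" if w: "w \<in> Dg" for w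
    proof -
      obtain u v c where w': "w = (u,v,c)" by (cases w)
      obtain gv where G: "cconj p g (u,v,c) = ereal gv" using Gfin w w' by blast
      obtain dv where D: "cconj p (ind A) (x,y,a) = ereal dv" using Dfin \<open>z \<in> DA\<close> z by blast
      have "cconj p f (u - x, - y, max a 1) \<le> cconj p f (u - x, - y, a)" by (rule shift_F[OF le])
      then show ?thesis unfolding w' z phi_simp G Deq D phi_eq_aux by (rule aux_mono)
    qed
    moreover have "(x,y,max a 1) \<in> Zset" by (simp add: Zset_def)
    ultimately show ?thesis using inDA by blast
  qed
  have phi_lt: "phi p f g A w z < \<infinity>" if hw: "w \<in> Dg" and hz: "z \<in> DA" for w z
  proof -
    obtain u v c where w: "w = (u,v,c)" by (cases w)
    obtain x y a where z: "z = (x,y,a)" by (cases z)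
    obtain gv dv where E: "phi p f g A (u,v,c) (x,y,a) = ereal gv - cconj p f (u - x, - y, a) - ereal dv"
      using phiE[of u v c x y a] hw hz w z by blast
    obtain t0 r where "f t0 = ereal r" using proper_fin[OF pf] by blast
    then have "cconj p f (u - x, - y, a) \<noteq> -\<infinity>" by (rule cconj_notminf)
    then show ?thesis unfolding w z E by (cases "cconj p f (u - x, - y, a)") auto
  qed
  have Dg_ne: "Dg \<noteq> {}"
  proof -
    obtain x0 g0 where gx: "g x0 = ereal g0" using proper_fin[OF pg] by blast
    have nmg: "\<forall>t. g t > -\<infinity>" using pg by (auto simp: proper_convex_def)
    obtain u where "cconj p g (u,0,1) \<le> ereal (p x0 u - (g0 - 1))"
      using minorant[OF dp assms(7) nmg gx, of "g0 - 1"] by auto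
    then have "(u,0,1) \<in> Dg" by (auto simp: Dg_def edom_def)
    then show ?thesis by blast
  qed
  have base: "((0::'y),(0::'y),(1::real)) \<in> DA"
  proof -
    have "minus_lo (cpl p t (0,0,1)) (ind A t) \<le> 0" for t
      using dp_lin(1)[OF dp, of t] by (simp add: cpl_simp ind_def minus_lo_def)
    then have "cconj p (ind A) (0,0,1) \<le> 0" unfolding cconj_def by (rule SUP_least)
    then show ?thesis by (auto simp: DA_def edom_def)
  qed
  have mm: "vDF p f g A \<le> vDbarF p f g A" by (rule minimax)
  have wk: "vDbarF p f g A \<le> vP f g A" by (rule weak[OF dp pf pg assms(5) assms(7)])
  have OK: "Omega p f g A \<subseteq> Kset p f g A" unfolding Omega_def Kset_def by blast
  show ?thesis
  proof
    assume sd: "strong_DF p f g A"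
    then have eq1: "vP f g A = vDF p f g A" by (simp add: strong_DF_def)
    obtain z0 where z0: "z0 \<in> DA" and W0: "\<forall>w\<in>Dg. phi p f g A w z0 \<ge> vDF p f g A"
      using sd by (auto simp: strong_DF_def DA_def Dg_def)
    have eq2: "vDbarF p f g A = vDF p f g A" using mm wk eq1 by simp
    have sdb: "strong_DbarF p f g A"
      unfolding strong_DbarF_def using eq1 eq2 z0 W0 by (auto simp: DA_def Dg_def)
    have "Kset p f g A \<inter> Bset \<subseteq> Omega p f g A"
    proof
      fix q assume q: "q \<in> Kset p f g A \<inter> Bset"
      then obtain b r where qb: "q = ((0,0,b),r)" and b: "b > 0" by (auto simp: Bset_def)
      have "ereal (- r) \<le> (SUP z\<in>Zset. phi p f g A w z)" if w: "w \<in> Dg" for w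
      proof -
        obtain z where z: "z \<in> DA" "q \<in> Eset p f g A w z"
          using q w by (auto simp: Kset_def Dg_def DA_def)
        then have "ereal (- r) \<le> phi p f g A w z" using memB[OF w z(1) b] qb by simp
        moreover obtain z' where "z' \<in> Zset" "phi p f g A w z \<le> phi p f g A w z'"
          using toZ[OF z(1)] w by blast
        ultimately show ?thesis by (meson SUP_upper order_trans)
      qed
      then have "ereal (- r) \<le> vDbarF p f g A" unfolding vDbarF_def Dg_def by (rule INF_greatest)
      then have "ereal (- r) \<le> vDF p f g A" using eq2 by simp
      then have "\<forall>w\<in>Dg. q \<in> Eset p f g A w z0" using memB[OF _ z0 b] W0 qb by (meson order_trans)
      then show "q \<in> Omega p f g A" using z0 by (auto simp: Omega_def Dg_def DA_def)
    qed
    then have "Omega p f g A \<inter> Bset = Kset p f g A \<inter> Bset" using OK by blast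
    with sdb show "strong_DbarF p f g A \<and> Omega p f g A \<inter> Bset = Kset p f g A \<inter> Bset" by blast
  next
    assume H: "strong_DbarF p f g A \<and> Omega p f g A \<inter> Bset = Kset p f g A \<inter> Bset"
    then have eq1: "vP f g A = vDbarF p f g A"
      and W: "\<forall>w\<in>Dg. \<exists>z\<in>DA. phi p f g A w z \<ge> vDbarF p f g A"
      and S: "Omega p f g A \<inter> Bset = Kset p f g A \<inter> Bset"
      by (auto simp: strong_DbarF_def Dg_def DA_def)
    show "strong_DF p f g A"
    proof (cases "vDbarF p f g A")
      case (real v)
      define q where "q = (((0::'y),(0::'y),(1::real)), - v)"
      have "q \<in> Kset p f g A \<inter> Bset"
      proof -
        have "\<exists>z\<in>DA. q \<in> Eset p f g A w z" if w: "w \<in> Dg" for w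
        proof -
          obtain z where "z \<in> DA" "phi p f g A w z \<ge> ereal v" using W w real by auto
          then show ?thesis using memB[OF w, of z 1 "- v"] q_def by auto
        qed
        then show ?thesis by (auto simp: Kset_def Bset_def q_def Dg_def DA_def)
      qed
      then have "q \<in> Omega p f g A" using S by blast
      then obtain z0 where z0: "z0 \<in> DA" and Wq: "\<forall>w\<in>Dg. q \<in> Eset p f g A w z0"
        by (auto simp: Omega_def Dg_def DA_def)
      have W0: "\<forall>w\<in>Dg. ereal v \<le> phi p f g A w z0"
        using Wq memB[OF _ z0, of _ 1 "- v"] q_def by auto
      obtain z' where z': "z' \<in> Zset" "\<forall>w\<in>Dg. phi p f g A w z0 \<le> phi p f g A w z'"
        using toZ[OF z0] by blast
      have "ereal v \<le> (INF w\<in>Dg. phi p f g A w z')"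
        using W0 z'(2) by (meson INF_greatest order_trans)
      also have "\<dots> \<le> vDF p f g A" unfolding vDF_def Dg_def using z'(1) by (rule SUP_upper)
      finally have "vDF p f g A = vDbarF p f g A" using mm real by simp
      then show ?thesis unfolding strong_DF_def using eq1 z0 W0 real
        by (auto simp: Dg_def DA_def)
    next
      case PInf
      obtain w where w: "w \<in> Dg" using Dg_ne by blast
      then obtain z where "z \<in> DA" "phi p f g A w z \<ge> \<infinity>" using W PInf by auto
      then show ?thesis using phi_lt[OF w] by (simp add: top_unique)
    next
      case MInf
      then have "vDF p f g A = -\<infinity>" using mm by simp
      then show ?thesis unfolding strong_DF_def using eq1 MInf base
        by (auto simp: DA_def)
    qed
  qed
qed

end
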